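(* If $\Delta(w)=\emptyset$ for some $w\in\mathbb Z_{d,\ell}$, then $\kappa=1$ and $w=-\mu_1$.
   Context: Let $\mathbf K$ be a field and $\ell\geq 2$ an integer. Let $L=a_n\phi_\ell^n+\dots+a_0$ with $n\geq1$, $a_i\in\mathbf K[z]$, $a_0a_n\neq0$, where $\phi_\ell(f)(z)=f(z^\ell)$. Let $\mathcal P(L)=\{(\ell^i,j): 0\le i\le n,\ j\in\operatorname{supp} a_i\}$. The Newton polygon of $L$ is the convex hull of $\{(\ell^i,j): 0\le i\le n,\ j\geq\operatorname{val} a_i\}\subset\mathbb R^2$; its non-vertical edges have pairwise distinct slopes $\mu_1<\dots<\mu_\kappa$. Let $d\geq1$ be a common multiple of the denominators of the $\mu_k$ and $\mathbb Z_{d,\ell}=\bigcup_{i\geq0}\frac{1}{d\ell^i}\mathbb Z$. Define $\psi(v)=\min\{v\ell^i+j:(\ell^i,j)\in\mathcal P(L)\}$ and $\Delta(w)=\left\{\frac{\psi(w)-\beta}{\ell^\alpha}:(\ell^\alpha,\beta)\in\mathcal P(L)\right\}\setminus\{w\}$. *)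

theory Defs
  imports "HOL-Analysis.Analysis" "HOL-Computational_Algebra.Polynomial"
begin

text \<open>The operator L = a_n phi_l^n + ... + a_0 is represented by its coefficient
  sequence a :: nat => 'a poly (only a 0, ..., a n matter) together with l and n.\<close>

definition supp_pts :: "nat \<Rightarrow> nat \<Rightarrow> (nat \<Rightarrow> 'a::zero poly) \<Rightarrow> (real \<times> real) set" where
  "supp_pts l n a = {(real l ^ i, real j) | i j. i \<le> n \<and> coeff (a i) j \<noteq> 0}"

definition pval :: "'a::zero poly \<Rightarrow> nat" where
  "pval p = (LEAST j. coeff p j \<noteq> 0)"

text \<open>Newton polygon: convex hull of {(l^i, j) : 0 <= i <= n, j >= val a_i}
  (a zero a_i has valuation +infinity and contributes no points).\<close>
definition newton_polygon :: "nat \<Rightarrow> nat \<Rightarrow> (nat \<Rightarrow> 'a::zero poly) \<Rightarrow> (real \<times> real) set" where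
  "newton_polygon l n a = convex hull
     {(real l ^ i, y) | i y. i \<le> n \<and> a i \<noteq> 0 \<and> real (pval (a i)) \<le> y}"

definition newton_slopes :: "nat \<Rightarrow> nat \<Rightarrow> (nat \<Rightarrow> 'a::zero poly) \<Rightarrow> real set" where
  "newton_slopes l n a = {(snd q - snd p) / (fst q - fst p) | F p q.
      F face_of newton_polygon l n a \<and> aff_dim F = 1 \<and> p \<in> F \<and> q \<in> F \<and> fst p \<noteq> fst q}"

definition psi :: "nat \<Rightarrow> nat \<Rightarrow> (nat \<Rightarrow> 'a::zero poly) \<Rightarrow> real \<Rightarrow> real" where
  "psi l n a v = Min ((\<lambda>(x, y). v * x + y) ` supp_pts l n a)"

definition Delta :: "nat \<Rightarrow> nat \<Rightarrow> (nat \<Rightarrow> 'a::zero poly) \<Rightarrow> real \<Rightarrow> real set" where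
  "Delta l n a w = ((\<lambda>(x, y). (psi l n a w - y) / x) ` supp_pts l n a) - {w}"

definition Zdl :: "nat \<Rightarrow> nat \<Rightarrow> real set" where
  "Zdl d l = {of_int k / (real d * real l ^ i) | k i. True}"

end

theory Submission
  imports Defs
begin

theorem mainTheorem14:
  fixes a :: "nat \<Rightarrow> 'a::field poly" and l n d :: nat and w :: real
  assumes "l \<ge> 2" and "n \<ge> 1" and "a 0 \<noteq> 0" and "a n \<noteq> 0"
    and "d \<ge> 1"
    and "\<forall>\<mu>\<in>newton_slopes l n a. \<exists>k::int. real d * \<mu> = of_int k"
    and "w \<in> Zdl d l"
    and "Delta l n a w = {}"
  shows "card (newton_slopes l n a) = 1 \<and> w = - Min (newton_slopes l n a)"
proof -
  define c where "c = psi l n a w"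
  define L where "L = real l ^ n"
  have l1: "real l > 1" using assms(1) by simp
  have L1: "L > 1" unfolding L_def using l1 assms(2)
    by (intro one_less_power) auto
  have line: "w * x + y = c" if "(x, y) \<in> supp_pts l n a" for x y
  proof -
    have x0: "x > 0" using that l1 unfolding supp_pts_def by auto
    have "(c - y) / x = w"
      using assms(8) that unfolding Delta_def c_def by blast
    then show ?thesis using x0 by (simp add: field_simps)
  qed
  have pv: "coeff (a i) (pval (a i)) \<noteq> 0" if "a i \<noteq> 0" for i
    unfolding pval_def by (rule LeastI_ex) (use that in \<open>auto simp: poly_eq_iff\<close>)
  have gline: "w * real l ^ i + real (pval (a i)) = c" if "a i \<noteq> 0" "i \<le> n" for i
    using line[of "real l ^ i" "real (pval (a i))"] pv[OF that(1)] that(2)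
    unfolding supp_pts_def by auto
  define G where "G = {(real l ^ i, y) | i y. i \<le> n \<and> a i \<noteq> 0 \<and> real (pval (a i)) \<le> y}"
  define R where "R = {z::real\<times>real. 1 \<le> fst z \<and> fst z \<le> L \<and> c \<le> w * fst z + snd z}"
  have convR: "convex R"
    unfolding R_def convex_def
  proof (clarsimp)
    fix x1 y1 x2 y2 u v :: real
    assume h: "1 \<le> x1" "x1 \<le> L" "c \<le> w * x1 + y1" "1 \<le> x2" "x2 \<le> L" "c \<le> w * x2 + y2"
      "0 \<le> u" "0 \<le> v" "u + v = 1"
    have "u * 1 + v * 1 \<le> u * x1 + v * x2"
      using h by (intro add_mono mult_left_mono) auto
    moreover have "u * x1 + v * x2 \<le> u * L + v * L"
      using h by (intro add_mono mult_left_mono) auto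
    moreover have "u * c + v * c \<le> u * (w * x1 + y1) + v * (w * x2 + y2)"
      using h by (intro add_mono mult_left_mono) auto
    moreover have "u * L + v * L = L" "u * c + v * c = c" "u * 1 + v * 1 = 1"
      using h(9) by (metis distrib_right mult_1)+
    ultimately show "1 \<le> u * x1 + v * x2 \<and> u * x1 + v * x2 \<le> L \<and>
        c \<le> w * (u * x1 + v * x2) + (u * y1 + v * y2)"
      by (simp add: algebra_simps)
  qed
  have GR: "G \<subseteq> R"
  proof
    fix z assume "z \<in> G"
    then obtain i y where z: "z = (real l ^ i, y)" "i \<le> n" "a i \<noteq> 0" "real (pval (a i)) \<le> y"
      unfolding G_def by auto
    have "1 \<le> real l ^ i" using l1 by simp
    moreover have "real l ^ i \<le> L" unfolding L_def using l1 z(2) by (simp add: power_increasing)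
    moreover have "c \<le> w * real l ^ i + y" using gline[OF z(3,2)] z(4) by simp
    ultimately show "z \<in> R" unfolding R_def z by simp
  qed
  have PR: "newton_polygon l n a = R"
  proof
    show "newton_polygon l n a \<subseteq> R"
      unfolding newton_polygon_def G_def[symmetric] by (rule hull_minimal[where S=convex, OF GR convR])
  next
    show "R \<subseteq> newton_polygon l n a"
    proof
      fix z assume zR: "z \<in> R"
      obtain x y where z: "z = (x, y)" by force
      define t where "t = w * x + y - c"
      have t0: "t \<ge> 0" and x1: "1 \<le> x" "x \<le> L" using zR unfolding R_def t_def z by auto
      define lam where "lam = (x - 1) / (L - 1)"
      have lam: "0 \<le> lam" "lam \<le> 1" unfolding lam_def using x1 L1 by auto
      define p where "p = (1::real, c - w + t)"
      define q where "q = (L, c - w * L + t)"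
      have pG: "p \<in> G"
      proof -
        have "w * real l ^ 0 + real (pval (a 0)) = c" using gline[OF assms(3)] by simp
        then show ?thesis unfolding G_def p_def using assms(3) t0
          by (intro CollectI exI[of _ 0] exI[of _ "c - w + t"]) auto
      qed
      have qG: "q \<in> G"
      proof -
        have "w * L + real (pval (a n)) = c" using gline[OF assms(4)] unfolding L_def by simp
        then show ?thesis unfolding G_def q_def L_def using assms(4) t0
          by (intro CollectI exI[of _ n] exI[of _ "c - w * real l ^ n + t"]) auto
      qed
      have eq: "z = (1 - lam) *\<^sub>R p + lam *\<^sub>R q"
      proof -
        have "lam * (L - 1) = x - 1" unfolding lam_def using L1 by simp
        then have hx: "(1 - lam) * 1 + lam * L = x" by (simp add: algebra_simps)
        moreover have "(1 - lam) * (c - w + t) + lam * (c - w * L + t) = y"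
        proof -
          have "(1 - lam) * (c - w + t) + lam * (c - w * L + t)
              = c + t - w * ((1 - lam) * 1 + lam * L)" by (simp add: algebra_simps)
          also have "\<dots> = c + t - w * x" using hx by simp
          finally show ?thesis unfolding t_def by simp
        qed
        ultimately show ?thesis using hx unfolding z p_def q_def by simp
      qed
      show "z \<in> newton_polygon l n a"
        unfolding newton_polygon_def G_def[symmetric] eq
        using convexD[OF convex_convex_hull hull_inc[OF pG] hull_inc[OF qG], of "1 - lam" lam] lam
        by simp
    qed
  qed
  define F0 where "F0 = R \<inter> {z. (-w, -1::real) \<bullet> z = - c}"
  have F0eq: "F0 = {z. 1 \<le> fst z \<and> fst z \<le> L \<and> w * fst z + snd z = c}"
    unfolding F0_def R_def by (auto simp: inner_prod_def)
  have F0face: "F0 face_of R"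
    unfolding F0_def
    by (rule face_of_Int_supporting_hyperplane_le[OF convR]) (auto simp: R_def inner_prod_def)
  have p0: "(1, c - w) \<in> F0" and q0: "(L, c - w * L) \<in> F0" using L1 unfolding F0eq by auto
  have colF0: "collinear F0"
    unfolding collinear_def
  proof (intro exI[of _ "(1::real, -w)"] ballI)
    fix x y assume "x \<in> F0" "y \<in> F0"
    then show "\<exists>c. x - y = c *\<^sub>R (1, - w)" unfolding F0eq
      by (intro exI[of _ "fst x - fst y"]) (auto simp: prod_eq_iff algebra_simps)
  qed
  have adF0: "aff_dim F0 = 1"
  proof -
    have "aff_dim F0 \<le> 1" using colF0 collinear_aff_dim by blast
    moreover have "aff_dim F0 \<noteq> -1" using aff_dim_empty p0 by blast
    moreover have "aff_dim F0 \<noteq> 0" using aff_dim_eq_0 p0 q0 L1 by (metis prod.inject singletonD less_irrefl)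
    moreover have "aff_dim F0 \<ge> -1" by (rule aff_dim_geq)
    ultimately show ?thesis by linarith
  qed
  have slopes: "newton_slopes l n a = {-w}"
  proof
    show "{-w} \<subseteq> newton_slopes l n a"
    proof -
      have "(snd (L, c - w * L) - snd (1::real, c - w)) / (fst (L, c - w * L) - fst (1::real, c - w)) = -w"
        using L1 by (simp add: field_simps)
      then have "-w \<in> {(snd q - snd p) / (fst q - fst p) | F p q.
          F face_of R \<and> aff_dim F = 1 \<and> p \<in> F \<and> q \<in> F \<and> fst p \<noteq> fst q}"
        using F0face adF0 p0 q0 L1 by (intro CollectI exI[of _ F0] exI[of _ "(1, c - w)"] exI[of _ "(L, c - w * L)"]) auto
      then show ?thesis unfolding newton_slopes_def PR by simp
    qed
  next
    show "newton_slopes l n a \<subseteq> {-w}"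
    proof
      fix m assume "m \<in> newton_slopes l n a"
      then obtain F p q where F: "F face_of R" "aff_dim F = 1" "p \<in> F" "q \<in> F" "fst p \<noteq> fst q"
        and m: "m = (snd q - snd p) / (fst q - fst p)"
        unfolding newton_slopes_def PR by blast
      have colF: "collinear F" unfolding collinear_aff_dim using F(2) by simp
      have FR: "F \<subseteq> R" using F(1) face_of_imp_subset by blast
      have onl: "w * fst z + snd z = c" if zF: "z \<in> F" and zz: "fst z \<noteq> fst z'" and z'F: "z' \<in> F" for z z'
      proof (rule ccontr)
        assume ne: "w * fst z + snd z \<noteq> c"
        have zR: "z \<in> R" using that FR by blast
        define e where "e = w * fst z + snd z - c"
        have e0: "e > 0" using ne zR unfolding e_def R_def by auto
        define zm where "zm = z - (0, e)"
        define zp where "zp = z + (0, e)"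
        have zmR: "zm \<in> R" and zpR: "zp \<in> R" using zR e0 unfolding zm_def zp_def R_def e_def by auto
        have "z = midpoint zm zp" unfolding zm_def zp_def midpoint_def
          by (simp add: prod_eq_iff)
        moreover have "zm \<noteq> zp" using e0 unfolding zm_def zp_def by (simp add: prod_eq_iff)
        ultimately have "z \<in> open_segment zm zp" by simp
        then have "zp \<in> F" using face_ofD[OF F(1) _ zmR zpR that(1)] by simp
        have "\<exists>u. \<forall>x\<in>F. \<forall>y\<in>F. \<exists>c. x - y = c *\<^sub>R u"
          using colF by (simp only: collinear_def)
        then obtain u where u: "\<forall>x\<in>F. \<forall>y\<in>F. \<exists>c. x - y = c *\<^sub>R u" by (elim exE)
        obtain c1 where c1: "zp - z = c1 *\<^sub>R u" using bspec[OF bspec[OF u \<open>zp \<in> F\<close>] zF] by (elim exE)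
        obtain c2 where c2: "z' - z = c2 *\<^sub>R u" using bspec[OF bspec[OF u z'F] zF] by (elim exE)
        have "fst (zp - z) = 0" unfolding zp_def by simp
        moreover have "snd (zp - z) \<noteq> 0" unfolding zp_def using e0 by simp
        moreover have "fst (zp - z) = c1 * fst u" "snd (zp - z) = c1 * snd u"
          using c1 by simp_all
        ultimately have "c1 \<noteq> 0" "c1 * fst u = 0" by auto
        then have "fst u = 0" by simp
        moreover have "fst (z' - z) = c2 * fst u" using c2 by simp
        ultimately have "fst (z' - z) = 0" by simp
        then show False using that(2) by simp
      qed
      have "w * fst p + snd p = c" using onl[OF F(3) F(5) F(4)] .
      moreover have "w * fst q + snd q = c" using onl[OF F(4) _ F(3)] F(5) by metis
      ultimately have "snd q - snd p = -w * (fst q - fst p)" by (simp add: algebra_simps)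
      then show "m \<in> {-w}" using m F(5) by simp
    qed
  qed
  show ?thesis using slopes by simp
qed

end
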